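(* Let $\mathcal{A}:\mathbb{C}^{m\times n}\to\mathbb{C}^p$ be linear with rank-restricted isometry constant $\delta_r(\mathcal{A})$. Let $\Psi,\Upsilon\subset\mathbb{O}$ be sets of atoms and $X\in\mathbb{C}^{m\times n}$ such that $\mathcal{P}_\Upsilon^\perp\mathcal{P}_\Psi=\mathcal{P}_\Psi\mathcal{P}_\Upsilon^\perp$, $\mathcal{P}_\Upsilon^\perp X=0$, and $|\Psi|\le r$. Then $\|\mathcal{P}_\Upsilon^\perp\mathcal{P}_\Psi\mathcal{A}^*\mathcal{A}\mathcal{P}_\Psi X\|_F\le\sqrt2\,\delta_r(\mathcal{A})\|\mathcal{P}_\Psi X\|_F$.
   Context: $\mathbb{C}^p$ has inner product $\langle x,y\rangle=y^Hx$ and norm $\|\cdot\|_2$; $\mathbb{C}^{m\times n}$ has inner product $\langle X,Y\rangle=\mathrm{tr}(Y^HX)$ and Frobenius norm $\|\cdot\|_F$; $\mathcal{A}^*$ is the adjoint of $\mathcal{A}$. $\delta_r(\mathcal{A})$ is the smallest $\delta\ge0$ such that $(1-\delta)\|X\|_F^2\le\|\mathcal{A}X\|_2^2\le(1+\delta)\|X\|_F^2$ for all $X$ with $\mathrm{rank}(X)\le r$. The set of atoms $\mathbb{O}$ is a set of unit-Frobenius-norm rank-one matrices in $\mathbb{C}^{m\times n}$ such that every nonzero rank-one matrix is a scalar multiple of exactly one element of $\mathbb{O}$. For $\Psi\subset\mathbb{O}$, $\mathcal{P}_\Psi$ is the orthogonal projection onto $\mathrm{span}(\Psi)$ and $\mathcal{P}_\Psi^\perp=I-\mathcal{P}_\Psi$.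 *)

theory Defs
  imports "HOL-Analysis.Analysis"
begin

text \<open>Matrices in C^(m x n) are complex^'n^'m (rows indexed by 'm, columns by 'n);
  vectors in C^p are complex^'p.  The norm of these types is the Euclidean / Frobenius norm.\<close>

definition mscale :: "complex \<Rightarrow> complex^'n^'m \<Rightarrow> complex^'n^'m" where
  "mscale c X = (\<chi> i j. c * X$i$j)"

definition cinner :: "complex^'p \<Rightarrow> complex^'p \<Rightarrow> complex" where
  "cinner x y = (\<Sum>i\<in>UNIV. x$i * cnj (y$i))"

definition frob_inner :: "complex^'n^'m \<Rightarrow> complex^'n^'m \<Rightarrow> complex" where
  "frob_inner X Y = (\<Sum>i\<in>UNIV. \<Sum>j\<in>UNIV. X$i$j * cnj (Y$i$j))"

definition cspan :: "(complex^'n^'m) set \<Rightarrow> (complex^'n^'m) set" where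
  "cspan S = module.span mscale S"

definition proj :: "(complex^'n^'m) set \<Rightarrow> complex^'n^'m \<Rightarrow> complex^'n^'m" where
  "proj S X = (THE Y. Y \<in> cspan S \<and> (\<forall>Z\<in>cspan S. frob_inner (X - Y) Z = 0))"

definition proj_perp :: "(complex^'n^'m) set \<Rightarrow> complex^'n^'m \<Rightarrow> complex^'n^'m" where
  "proj_perp S X = X - proj S X"

definition clinear_map :: "(complex^'n^'m \<Rightarrow> complex^'p) \<Rightarrow> bool" where
  "clinear_map A = Vector_Spaces.linear mscale (*s) A"

definition adj :: "(complex^'n^'m \<Rightarrow> complex^'p) \<Rightarrow> complex^'p \<Rightarrow> complex^'n^'m" where
  "adj A y = (THE W. \<forall>Z. cinner (A Z) y = frob_inner Z W)"

definition rip_const :: "nat \<Rightarrow> (complex^'n^'m \<Rightarrow> complex^'p) \<Rightarrow> real" where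
  "rip_const r A = Inf {\<delta>. \<delta> \<ge> 0 \<and> (\<forall>X::complex^'n^'m. rank X \<le> r \<longrightarrow>
      (1 - \<delta>) * (norm X)^2 \<le> (norm (A X))^2 \<and> (norm (A X))^2 \<le> (1 + \<delta>) * (norm X)^2)}"

definition atom_set :: "(complex^'n^'m) set \<Rightarrow> bool" where
  "atom_set Atoms \<longleftrightarrow> (\<forall>a\<in>Atoms. rank a = 1 \<and> norm a = 1) \<and>
     (\<forall>X::complex^'n^'m. rank X = 1 \<longrightarrow> (\<exists>!a. a \<in> Atoms \<and> (\<exists>c. X = mscale c a)))"

end

theory Submission
  imports Defs
begin

interpretation ms: vector_space "mscale :: complex \<Rightarrow> complex^'n^'m \<Rightarrow> complex^'n^'m"
  by unfold_locales (auto simp: mscale_def vec_eq_iff algebra_simps)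

lemma cscaleR: "c *\<^sub>R (z::complex) = of_real c * z"
  by (simp add: scaleR_conv_of_real)

lemma mscale_real: "mscale (of_real c) X = c *\<^sub>R X"
  by (simp add: mscale_def vec_eq_iff cscaleR)

lemma svec_real: "(of_real c :: complex) *s (x::complex^'p) = c *\<^sub>R x"
  by (simp add: vec_eq_iff cscaleR)

lemma cspan_subspace: "subspace (cspan S)"
  unfolding subspace_def cspan_def
  by (metis ms.span_zero ms.span_add ms.span_scale mscale_real)

lemma cspan_mscale: "x \<in> cspan S \<Longrightarrow> mscale c x \<in> cspan S"
  unfolding cspan_def by (rule ms.span_scale)

lemma inner_frob: "x \<bullet> y = Re (frob_inner x y)"
  by (simp add: inner_vec_def frob_inner_def inner_complex_def)

lemma inner_cinner: "x \<bullet> y = Re (cinner x y)"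
  by (simp add: inner_vec_def cinner_def inner_complex_def)

lemma frob_scale_left: "frob_inner (mscale c x) y = c * frob_inner x y"
  by (simp add: frob_inner_def mscale_def sum_distrib_left mult.assoc)

lemma frob_scale_right: "frob_inner x (mscale c y) = cnj c * frob_inner x y"
  by (simp add: frob_inner_def mscale_def sum_distrib_left algebra_simps)

lemma cinner_scale_left: "cinner (c *s x) y = c * cinner x y"
  by (simp add: cinner_def sum_distrib_left mult.assoc)

lemma Im_frob: "Im (frob_inner x y) = x \<bullet> mscale \<i> y"
  by (simp add: inner_frob frob_scale_right)

lemma proj_real_unique:
  assumes "y \<in> cspan S" "\<forall>z\<in>cspan S. (X - y) \<bullet> z = 0"
     "y' \<in> cspan S" "\<forall>z\<in>cspan S. (X - y') \<bullet> z = 0"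
  shows "y' = y"
proof -
  have d: "y - y' \<in> cspan S" using assms cspan_subspace subspace_diff by blast
  have "(X - y') \<bullet> (y - y') - (X - y) \<bullet> (y - y') = 0" using assms d by simp
  then have "(y - y') \<bullet> (y - y') = 0" by (simp add: inner_diff_left)
  then show ?thesis by simp
qed

lemma proj_exists: "\<exists>y. y \<in> cspan S \<and> (\<forall>z\<in>cspan S. (X - y) \<bullet> z = 0)"
proof -
  obtain y z where "y \<in> span (cspan S)" "\<And>w. w \<in> span (cspan S) \<Longrightarrow> orthogonal z w" "X = y + z"
    using orthogonal_subspace_decomp_exists by blast
  moreover have "span (cspan S) = cspan S" using cspan_subspace[of S] by simp
  ultimately show ?thesis
    by (auto simp: orthogonal_def intro!: exI[of _ y])
qed

lemma frob_zero_iff: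
  assumes "\<forall>z\<in>cspan S. w \<bullet> z = 0" "z \<in> cspan S"
  shows "frob_inner w z = 0"
proof -
  have "Re (frob_inner w z) = 0" using assms inner_frob by metis
  moreover have "Im (frob_inner w z) = 0" using assms Im_frob cspan_mscale by metis
  ultimately show ?thesis by (simp add: complex_eq_iff)
qed

lemma proj_eq:
  assumes "y \<in> cspan S" "\<forall>z\<in>cspan S. (X - y) \<bullet> z = 0"
  shows "proj S X = y"
  unfolding proj_def
proof (rule the_equality)
  show "y \<in> cspan S \<and> (\<forall>Z\<in>cspan S. frob_inner (X - y) Z = 0)"
    using assms frob_zero_iff by blast
next
  fix y' assume "y' \<in> cspan S \<and> (\<forall>Z\<in>cspan S. frob_inner (X - y') Z = 0)"
  then show "y' = y" using proj_real_unique[OF assms] by (simp add: inner_frob)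
qed

lemma proj_props: "proj S X \<in> cspan S" "z \<in> cspan S \<Longrightarrow> (X - proj S X) \<bullet> z = 0"
proof -
  obtain y where y: "y \<in> cspan S" "\<forall>z\<in>cspan S. (X - y) \<bullet> z = 0" using proj_exists by blast
  show "proj S X \<in> cspan S" "z \<in> cspan S \<Longrightarrow> (X - proj S X) \<bullet> z = 0"
    using proj_eq[OF y] y by auto
qed

lemma proj_zero: "proj S 0 = 0"
  by (rule proj_eq) (auto simp: cspan_subspace subspace_0)

lemma real_linear:
  assumes "clinear_map (A :: complex^'n^'m \<Rightarrow> complex^'p)"
  shows "linear A"
proof -
  have add: "\<And>x y. A (x + y) = A x + A y" and sc: "\<And>c x. A (mscale c x) = c *s A x"
    using assms unfolding clinear_map_def Vector_Spaces.linear_iff by auto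
  show ?thesis
    by (rule linearI) (auto simp: add sc mscale_real[symmetric] svec_real)
qed

lemma adj_eq:
  assumes "clinear_map (A :: complex^'n^'m \<Rightarrow> complex^'p)"
  shows "adj A y = adjoint A y"
  unfolding adj_def
proof (rule the_equality)
  have lin: "linear A" using real_linear[OF assms] .
  have sc: "\<And>c x. A (mscale c x) = c *s A x"
    using assms unfolding clinear_map_def Vector_Spaces.linear_iff by auto
  show "\<forall>Z. cinner (A Z) y = frob_inner Z (adjoint A y)"
  proof
    fix Z
    have re: "\<And>Z. Re (cinner (A Z) y) = Re (frob_inner Z (adjoint A y))"
      using adjoint_works[OF lin] by (metis inner_frob inner_cinner)
    have "Im (cinner (A Z) y) = Re (cinner (A (mscale (-\<i>) Z)) y)"
      by (simp only: sc cinner_scale_left) simp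
    also have "\<dots> = Re (frob_inner (mscale (-\<i>) Z) (adjoint A y))" by (rule re)
    also have "\<dots> = Im (frob_inner Z (adjoint A y))" by (simp only: frob_scale_left) simp
    finally show "cinner (A Z) y = frob_inner Z (adjoint A y)"
      using re[of Z] by (simp add: complex_eq_iff)
  qed
next
  have lin: "linear A" using real_linear[OF assms] .
  fix W assume h: "\<forall>Z. cinner (A Z) y = frob_inner Z W"
  have "\<And>Z. Z \<bullet> W = Z \<bullet> adjoint A y"
    using h adjoint_works[OF lin] by (metis inner_frob inner_cinner)
  then have "(W - adjoint A y) \<bullet> (W - adjoint A y) = 0" by (simp add: inner_diff_right)
  then show "W = adjoint A y" by simp
qed

lemma row_sum_mscale:
  "row i (\<Sum>a\<in>P. mscale (u a) a) = (\<Sum>a\<in>P. u a *s row i (a::complex^'n^'m))"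
  by (simp add: vec_eq_iff row_def mscale_def sum_component)

lemma rank_cspan:
  fixes \<Psi> :: "(complex^'n^'m) set"
  assumes fin: "finite \<Psi>" and r1: "\<forall>a\<in>\<Psi>. rank a = 1" and Y: "Y \<in> cspan \<Psi>"
  shows "rank Y \<le> card \<Psi>"
proof -
  have "\<forall>a\<in>\<Psi>. \<exists>v. rows a \<subseteq> vec.span {v}"
  proof
    fix a assume "a \<in> \<Psi>"
    then have d: "vec.dim (rows a) = 1" using r1 by (simp add: row_rank_def_gen)
    obtain B where "B \<subseteq> rows a" "vec.independent B" "rows a \<subseteq> vec.span B" "card B = vec.dim (rows a)"
      using vec.basis_exists by blast
    then show "\<exists>v. rows a \<subseteq> vec.span {v}" using d by (metis card_1_singletonE)
  qed
  then obtain v where v: "\<forall>a\<in>\<Psi>. rows a \<subseteq> vec.span {v a}" by metis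
  obtain u where Yu: "Y = (\<Sum>a\<in>\<Psi>. mscale (u a) a)"
    using Y fin unfolding cspan_def ms.span_finite[OF fin] by blast
  have "rows Y \<subseteq> vec.span (v ` \<Psi>)"
  proof
    fix x assume "x \<in> rows Y"
    then obtain i where x: "x = row i Y" by (auto simp: rows_def)
    have "\<And>a. a \<in> \<Psi> \<Longrightarrow> row i a \<in> vec.span (v ` \<Psi>)"
    proof -
      fix a assume a: "a \<in> \<Psi>"
      have "row i a \<in> rows a" by (auto simp: rows_def)
      then have "row i a \<in> vec.span {v a}" using v a by blast
      moreover have "vec.span {v a} \<subseteq> vec.span (v ` \<Psi>)" using a by (intro vec.span_mono) auto
      ultimately show "row i a \<in> vec.span (v ` \<Psi>)" by blast
    qed
    then show "x \<in> vec.span (v ` \<Psi>)"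
      unfolding x Yu row_sum_mscale by (intro vec.span_sum vec.span_scale) auto
  qed
  then have "vec.dim (rows Y) \<le> card (v ` \<Psi>)" using fin by (intro vec.dim_le_card) auto
  also have "\<dots> \<le> card \<Psi>" using fin by (rule card_image_le)
  finally show ?thesis by (simp add: row_rank_def_gen)
qed

lemma rip_bound:
  fixes A :: "'a::euclidean_space \<Rightarrow> 'b::euclidean_space" and rk :: "'a \<Rightarrow> nat"
  assumes lin: "linear A"
    and D: "\<forall>X. rk X \<le> r \<longrightarrow> (1-\<delta>)*(norm X)^2 \<le> (norm (A X))^2 \<and> (norm (A X))^2 \<le> (1+\<delta>)*(norm X)^2"
    and rkV: "\<forall>Y\<in>V. rk Y \<le> r" and V: "subspace V" and W: "W \<in> V" and Z: "Z \<in> V" and o: "W \<bullet> Z = 0"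
  shows "A W \<bullet> A Z \<le> \<delta> * norm W * norm Z"
proof -
  define a where "a = norm W"
  define b where "b = norm Z"
  define p where "p = b *\<^sub>R W + a *\<^sub>R Z"
  define q where "q = b *\<^sub>R W - a *\<^sub>R Z"
  have pV: "p \<in> V" "q \<in> V" unfolding p_def q_def using V W Z
    by (auto intro: subspace_add subspace_diff subspace_scale)
  have WW: "W \<bullet> W = a^2" "Z \<bullet> Z = b^2" by (simp_all add: a_def b_def power2_norm_eq_inner)
  have o2: "Z \<bullet> W = 0" using o by (simp add: inner_commute)
  have np: "(norm p)^2 = 2*a^2*b^2" "(norm q)^2 = 2*a^2*b^2"
    unfolding power2_norm_eq_inner p_def q_def
    by (simp_all add: inner_add_left inner_add_right inner_diff_left inner_diff_right WW o o2 power2_eq_square)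
  have Ap: "A p = b *\<^sub>R A W + a *\<^sub>R A Z" "A q = b *\<^sub>R A W - a *\<^sub>R A Z"
    unfolding p_def q_def using lin by (simp_all add: linear_add linear_diff linear_scale)
  have "(norm (A p))^2 - (norm (A q))^2 = 4*a*b*(A W \<bullet> A Z)"
    unfolding power2_norm_eq_inner Ap
    by (simp add: inner_add_left inner_add_right inner_diff_left inner_diff_right inner_commute algebra_simps)
  moreover have "(norm (A p))^2 \<le> (1+\<delta>)*(2*a^2*b^2)" using D rkV pV np by metis
  moreover have "(1-\<delta>)*(2*a^2*b^2) \<le> (norm (A q))^2" using D rkV pV np by metis
  ultimately have key: "4*a*b*(A W \<bullet> A Z) \<le> 4*a*b*(\<delta>*a*b)"
    by (simp add: algebra_simps power2_eq_square)
  show ?thesis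
  proof (cases "a = 0 \<or> b = 0")
    case True
    then have "W = 0 \<or> Z = 0" by (auto simp: a_def b_def)
    then show ?thesis using lin by (auto simp: linear_0)
  next
    case False
    then have "4*a*b > 0" by (simp add: a_def b_def)
    then have "A W \<bullet> A Z \<le> \<delta>*a*b" using key mult_le_cancel_left_pos by blast
    then show ?thesis by (simp add: a_def b_def)
  qed
qed

theorem corollary1:
  fixes A :: "complex^'n^'m \<Rightarrow> complex^'p"
    and Atoms \<Psi> \<Upsilon> :: "(complex^'n^'m) set"
    and X :: "complex^'n^'m"
    and r :: nat
  assumes "clinear_map A"
    and "atom_set Atoms"
    and "\<Psi> \<subseteq> Atoms" and "\<Upsilon> \<subseteq> Atoms"
    and "proj_perp \<Upsilon> \<circ> proj \<Psi> = proj \<Psi> \<circ> proj_perp \<Upsilon>"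
    and "proj_perp \<Upsilon> X = 0"
    and "finite \<Psi>" and "card \<Psi> \<le> r"
  shows "norm (proj_perp \<Upsilon> (proj \<Psi> (adj A (A (proj \<Psi> X)))))
           \<le> sqrt 2 * rip_const r A * norm (proj \<Psi> X)"
proof -
  note cl = assms(1) and comm = assms(5) and fin = assms(7)
  have lin: "linear A" by (rule real_linear[OF cl])
  define Z where "Z = proj \<Psi> X"
  define G where "G = adj A (A Z)"
  define W where "W = proj_perp \<Upsilon> (proj \<Psi> G)"
  have ZP: "Z \<in> cspan \<Psi>" unfolding Z_def by (rule proj_props)
  have "proj_perp \<Upsilon> Z = proj \<Psi> (proj_perp \<Upsilon> X)" unfolding Z_def using comm
    by (metis comp_apply)
  then have "proj_perp \<Upsilon> Z = 0" using assms(6) proj_zero by simp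
  then have "Z = proj \<Upsilon> Z" by (simp add: proj_perp_def)
  then have ZU: "Z \<in> cspan \<Upsilon>" by (metis proj_props(1))
  have "W = proj \<Psi> (proj_perp \<Upsilon> G)" unfolding W_def using comm by (metis comp_apply)
  then have WP: "W \<in> cspan \<Psi>" by (metis proj_props(1))
  have Wperp: "\<And>z. z \<in> cspan \<Upsilon> \<Longrightarrow> W \<bullet> z = 0"
    unfolding W_def proj_perp_def by (rule proj_props(2))
  have oWZ: "W \<bullet> Z = 0" using Wperp ZU .
  have "proj \<Psi> G = W + proj \<Upsilon> (proj \<Psi> G)" unfolding W_def proj_perp_def by simp
  then have "W \<bullet> proj \<Psi> G = W \<bullet> W" using Wperp[OF proj_props(1)] by (metis inner_add_right add_0_right)
  moreover have "(G - proj \<Psi> G) \<bullet> W = 0" using WP by (rule proj_props(2))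
  ultimately have "W \<bullet> W = W \<bullet> G" by (metis inner_diff_right inner_commute eq_iff_diff_eq_0)
  also have "\<dots> = A W \<bullet> A Z" unfolding G_def adj_eq[OF cl] by (rule adjoint_works[OF lin])
  finally have WWe: "W \<bullet> W = A W \<bullet> A Z" .
  have rk: "\<forall>Y\<in>cspan \<Psi>. rank Y \<le> r"
  proof
    fix Y assume "Y \<in> cspan \<Psi>"
    moreover have "\<forall>a\<in>\<Psi>. rank a = 1" using assms(2,3) by (auto simp: atom_set_def)
    ultimately have "rank Y \<le> card \<Psi>" using fin rank_cspan by blast
    then show "rank Y \<le> r" using assms(8) by simp
  qed
  define D where "D = {\<delta>. \<delta> \<ge> 0 \<and> (\<forall>X::complex^'n^'m. rank X \<le> r \<longrightarrow>
      (1 - \<delta>) * (norm X)^2 \<le> (norm (A X))^2 \<and> (norm (A X))^2 \<le> (1 + \<delta>) * (norm X)^2)}"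
  have rc: "rip_const r A = Inf D" unfolding rip_const_def D_def ..
  have Dne: "D \<noteq> {}"
  proof -
    obtain B where B: "B > 0" "\<And>x. norm (A x) \<le> B * norm x" using linear_bounded_pos[OF lin] by blast
    define d where "d = max 1 (B^2)"
    have "d \<in> D" unfolding D_def
    proof (intro CollectI conjI allI impI)
      show "0 \<le> d" by (simp add: d_def)
      fix Y :: "complex^'n^'m"
      show "(1 - d) * (norm Y)^2 \<le> (norm (A Y))^2"
        by (rule order_trans[of _ 0]) (auto simp: d_def intro!: mult_nonpos_nonneg)
      have "(norm (A Y))^2 \<le> (B * norm Y)^2" using B(2)[of Y] by (simp add: power_mono)
      also have "\<dots> = B^2 * (norm Y)^2" by (simp add: power_mult_distrib)
      also have "\<dots> \<le> (1 + d) * (norm Y)^2" by (intro mult_right_mono) (auto simp: d_def)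
      finally show "(norm (A Y))^2 \<le> (1 + d) * (norm Y)^2" .
    qed
    then show ?thesis by blast
  qed
  have bnd: "norm W \<le> d * norm Z" if "d \<in> D" for d
  proof -
    have d: "\<forall>X. rank X \<le> r \<longrightarrow> (1-d)*(norm X)^2 \<le> (norm (A X))^2 \<and> (norm (A X))^2 \<le> (1+d)*(norm X)^2"
      using that by (simp add: D_def)
    have "norm W * norm W \<le> d * norm W * norm Z"
    proof -
      have "W \<bullet> W = norm W * norm W" by (simp add: dot_square_norm power2_eq_square)
      then show ?thesis using rip_bound[OF lin d rk cspan_subspace WP ZP oWZ] WWe by simp
    qed
    moreover have "0 \<le> d" using that by (simp add: D_def)
    ultimately show ?thesis
      by (cases "norm W = 0") (auto simp: mult.assoc mult.commute[of d] intro: mult_left_le_imp_le)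
  qed
  have "norm W \<le> Inf D * norm Z"
  proof (cases "norm Z = 0")
    case True then show ?thesis using bnd Dne by auto
  next
    case False
    then have nz: "norm Z > 0" by simp
    have "norm W / norm Z \<le> Inf D"
      by (rule cInf_greatest[OF Dne]) (use bnd nz in \<open>simp add: divide_le_eq\<close>)
    then show ?thesis using nz by (simp add: divide_le_eq)
  qed
  moreover have "0 \<le> Inf D" by (rule cInf_greatest[OF Dne]) (auto simp: D_def)
  moreover have "1 \<le> sqrt (2::real)" by simp
  ultimately have "norm W \<le> sqrt 2 * Inf D * norm Z"
    by (smt (verit, best) mult_right_mono norm_ge_zero mult_nonneg_nonneg mult_le_cancel_right1 mult.assoc)
  then show ?thesis unfolding rc W_def G_def Z_def .
qed

end
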